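(* Let $R$ be a commutative noetherian ring with unit, let $M$ be a finitely generated $R$-module, and let $\mathbf{A}$ be a $k\times l$ matrix with entries in $R$. The following are equivalent: (1) $\mathbf{A}$ is partition regular over $M$; (2) there exists an associated prime $\mathfrak{p}$ of $M$ such that $\mathbf{A}$ is partition regular over the $R$-module $R/\mathfrak{p}$.
   Context: All rings are commutative with unit. For an $R$-module $M$, a $k\times l$ matrix $\mathbf{A}$ over $R$ and an integer $r\ge 1$, $\mathbf{A}$ is partition regular over $M$ for $r$ colours if for every map $\chi\colon M\to\{1,\dots,r\}$ there is $\mathbf{m}=(m_1,\dots,m_l)^{\intercal}\in M^l$ with $\mathbf{A}\mathbf{m}=0$, $\mathbf{m}\neq 0$ and $\chi(m_1)=\dots=\chi(m_l)$. $\mathbf{A}$ is partition regular over $M$ if it is partition regular over $M$ for every number $r\ge1$ of colours. A prime ideal $\mathfrak p$ is an associated prime of $M$ if $\mathfrak p=\mathrm{ann}(m)=\{r\in R: rm=0\}$ for some $m\in M$. *)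

theory Defs
  imports "HOL-Algebra.Module" "HOL-Algebra.QuotRing" "HOL-Algebra.Ring_Divisibility"
begin

text \<open>A k x l matrix over R is a function nat => nat => 'a, entries A i j (i < k, j < l).
  A vector m in M^l is a function nat => 'b, components m j (j < l).\<close>

definition matrix_over :: "('a, 'c) ring_scheme \<Rightarrow> (nat \<Rightarrow> nat \<Rightarrow> 'a) \<Rightarrow> nat \<Rightarrow> nat \<Rightarrow> bool" where
  "matrix_over R A k l \<longleftrightarrow> (\<forall>i<k. \<forall>j<l. A i j \<in> carrier R)"

definition mat_apply :: "('a, 'b) module \<Rightarrow> (nat \<Rightarrow> nat \<Rightarrow> 'a) \<Rightarrow> nat \<Rightarrow> (nat \<Rightarrow> 'b) \<Rightarrow> nat \<Rightarrow> 'b" where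
  "mat_apply M A l m i = finsum M (\<lambda>j. A i j \<odot>\<^bsub>M\<^esub> m j) {..<l}"

definition partition_regular_for ::
  "('a, 'b) module \<Rightarrow> (nat \<Rightarrow> nat \<Rightarrow> 'a) \<Rightarrow> nat \<Rightarrow> nat \<Rightarrow> nat \<Rightarrow> bool" where
  "partition_regular_for M A k l r \<longleftrightarrow>
     (\<forall>\<chi> :: 'b \<Rightarrow> nat. \<chi> ` carrier M \<subseteq> {1..r} \<longrightarrow>
        (\<exists>m :: nat \<Rightarrow> 'b. (\<forall>j<l. m j \<in> carrier M)
           \<and> (\<forall>i<k. mat_apply M A l m i = \<zero>\<^bsub>M\<^esub>)
           \<and> (\<exists>j<l. m j \<noteq> \<zero>\<^bsub>M\<^esub>)
           \<and> (\<exists>c. \<forall>j<l. \<chi> (m j) = c)))"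

definition partition_regular ::
  "('a, 'b) module \<Rightarrow> (nat \<Rightarrow> nat \<Rightarrow> 'a) \<Rightarrow> nat \<Rightarrow> nat \<Rightarrow> bool" where
  "partition_regular M A k l \<longleftrightarrow> (\<forall>r\<ge>1. partition_regular_for M A k l r)"

definition finitely_generated_module :: "('a, 'c) ring_scheme \<Rightarrow> ('a, 'b) module \<Rightarrow> bool" where
  "finitely_generated_module R M \<longleftrightarrow>
     (\<exists>xs. set xs \<subseteq> carrier M \<and>
        (\<forall>x\<in>carrier M. \<exists>c. (\<forall>i<length xs. c i \<in> carrier R) \<and>
            x = finsum M (\<lambda>i. c i \<odot>\<^bsub>M\<^esub> xs ! i) {..<length xs}))"

definition annihilator :: "('a, 'c) ring_scheme \<Rightarrow> ('a, 'b) module \<Rightarrow> 'b \<Rightarrow> 'a set" where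
  "annihilator R M x = {a \<in> carrier R. a \<odot>\<^bsub>M\<^esub> x = \<zero>\<^bsub>M\<^esub>}"

definition associated_prime :: "('a, 'c) ring_scheme \<Rightarrow> ('a, 'b) module \<Rightarrow> 'a set \<Rightarrow> bool" where
  "associated_prime R M P \<longleftrightarrow> primeideal P R \<and> (\<exists>x\<in>carrier M. P = annihilator R M x)"

definition quot_module :: "('a, 'c) ring_scheme \<Rightarrow> 'a set \<Rightarrow> ('a, 'a set) module" where
  "quot_module R I =
     \<lparr> carrier = carrier (R Quot I), monoid.mult = monoid.mult (R Quot I),
       one = one (R Quot I), zero = zero (R Quot I), add = add (R Quot I),
       smult = (\<lambda>a C. (I +>\<^bsub>R\<^esub> a) \<otimes>\<^bsub>R Quot I\<^esub> C) \<rparr>"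

end

theory Submission
  imports Defs
begin


definition smod :: "('a, 'c) ring_scheme \<Rightarrow> ('a, 'b, 'd) module_scheme \<Rightarrow> 'b set \<Rightarrow> bool" where
  "smod R M N \<longleftrightarrow> N \<subseteq> carrier M \<and> \<zero>\<^bsub>M\<^esub> \<in> N \<and> (\<forall>x\<in>N. \<forall>y\<in>N. x \<oplus>\<^bsub>M\<^esub> y \<in> N)
      \<and> (\<forall>a\<in>carrier R. \<forall>x\<in>N. a \<odot>\<^bsub>M\<^esub> x \<in> N)"

definition annN :: "('a, 'c) ring_scheme \<Rightarrow> ('a, 'b, 'd) module_scheme \<Rightarrow> 'b set \<Rightarrow> 'b \<Rightarrow> 'a set" where
  "annN R M N x = {a \<in> carrier R. a \<odot>\<^bsub>M\<^esub> x \<in> N}"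

context module
begin

lemma smodD:
  assumes "smod R M N"
  shows "N \<subseteq> carrier M" "\<zero>\<^bsub>M\<^esub> \<in> N" "x \<in> N \<Longrightarrow> y \<in> N \<Longrightarrow> x \<oplus>\<^bsub>M\<^esub> y \<in> N"
    "a \<in> carrier R \<Longrightarrow> x \<in> N \<Longrightarrow> a \<odot>\<^bsub>M\<^esub> x \<in> N"
  using assms unfolding smod_def by auto

lemma smod_neg:
  assumes "smod R M N" "x \<in> N"
  shows "\<ominus>\<^bsub>M\<^esub> x \<in> N"
proof -
  have x: "x \<in> carrier M" using smodD(1)[OF assms(1)] assms(2) by auto
  have "\<ominus>\<^bsub>M\<^esub> x = (\<ominus> \<one>) \<odot>\<^bsub>M\<^esub> x"
    using smult_l_minus[of \<one> x] x by simp
  thus ?thesis using smodD(4)[OF assms(1), of "\<ominus> \<one>" x] assms(2) by simp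
qed

lemma smod_minus:
  assumes "smod R M N" "x \<in> N" "y \<in> N"
  shows "x \<ominus>\<^bsub>M\<^esub> y \<in> N"
  unfolding a_minus_def using smod_neg smodD assms by blast

lemma smod_finsum:
  assumes "smod R M N" "finite I" "\<And>i. i \<in> I \<Longrightarrow> f i \<in> N"
  shows "finsum M f I \<in> N"
  using assms(2,3)
proof (induction I rule: finite_induct)
  case empty
  then show ?case using smodD(2)[OF assms(1)] by simp
next
  case (insert i I)
  have "f \<in> insert i I \<rightarrow> carrier M" using insert.prems smodD(1)[OF assms(1)] by auto
  hence "finsum M f (insert i I) = f i \<oplus>\<^bsub>M\<^esub> finsum M f I"
    using insert.hyps by (simp add: finsum_insert)
  thus ?case using insert smodD(3)[OF assms(1)] by simp
qed

lemma add_minus_cancel: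
  assumes "x \<in> carrier M" "w \<in> carrier M"
  shows "w \<oplus>\<^bsub>M\<^esub> (x \<ominus>\<^bsub>M\<^esub> w) = x"
proof -
  have "w \<oplus>\<^bsub>M\<^esub> (x \<ominus>\<^bsub>M\<^esub> w) = x \<oplus>\<^bsub>M\<^esub> (w \<oplus>\<^bsub>M\<^esub> \<ominus>\<^bsub>M\<^esub> w)"
    unfolding a_minus_def using assms by (simp add: M.a_lcomm)
  thus ?thesis using assms by (simp add: M.r_neg)
qed

lemma smod_carrier: "smod R M (carrier M)"
  unfolding smod_def by auto

lemma finsum_smult_rdistr:
  assumes "finite I" "f \<in> I \<rightarrow> carrier R" "x \<in> carrier M"
  shows "finsum M (\<lambda>i. f i \<odot>\<^bsub>M\<^esub> x) I = (finsum R f I) \<odot>\<^bsub>M\<^esub> x"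
  using assms
proof (induction I rule: finite_induct)
  case empty
  then show ?case by simp
next
  case (insert i I)
  have "finsum M (\<lambda>i. f i \<odot>\<^bsub>M\<^esub> x) (insert i I) = f i \<odot>\<^bsub>M\<^esub> x \<oplus>\<^bsub>M\<^esub> finsum M (\<lambda>i. f i \<odot>\<^bsub>M\<^esub> x) I"
    using insert by (subst finsum_insert) (auto simp: Pi_def)
  also have "\<dots> = f i \<odot>\<^bsub>M\<^esub> x \<oplus>\<^bsub>M\<^esub> (finsum R f I) \<odot>\<^bsub>M\<^esub> x" using insert by auto
  also have "\<dots> = (f i \<oplus> finsum R f I) \<odot>\<^bsub>M\<^esub> x"
    using insert by (subst smult_l_distr) (auto simp: Pi_def)
  also have "\<dots> = (finsum R f (insert i I)) \<odot>\<^bsub>M\<^esub> x"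
    using insert by (subst R.finsum_insert) (auto simp: Pi_def)
  finally show ?case .
qed

lemma annN_ideal:
  assumes "smod R M N" "x \<in> carrier M"
  shows "ideal (annN R M N x) R"
proof (rule idealI)
  show "ring R" by (rule ring_axioms)
  show "subgroup (annN R M N x) (add_monoid R)"
  proof (rule subgroup.intro)
    show "annN R M N x \<subseteq> carrier (add_monoid R)" unfolding annN_def by auto
    show "\<one>\<^bsub>add_monoid R\<^esub> \<in> annN R M N x" unfolding annN_def using assms smodD by auto
    fix a b assume a: "a \<in> annN R M N x" and b: "b \<in> annN R M N x"
    show "a \<otimes>\<^bsub>add_monoid R\<^esub> b \<in> annN R M N x"
      using a b assms smodD(3)[OF assms(1), of "a \<odot>\<^bsub>M\<^esub> x" "b \<odot>\<^bsub>M\<^esub> x"]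
      unfolding annN_def by (auto simp: smult_l_distr)
    show "inv\<^bsub>add_monoid R\<^esub> a \<in> annN R M N x"
      using a assms smod_neg[OF assms(1), of "a \<odot>\<^bsub>M\<^esub> x"]
      unfolding annN_def by (auto simp: smult_l_minus a_inv_def[symmetric])
  qed
next
  fix a r assume a: "a \<in> annN R M N x" and r: "r \<in> carrier R"
  show "r \<otimes> a \<in> annN R M N x"
    using a r assms smodD(4)[OF assms(1), of r "a \<odot>\<^bsub>M\<^esub> x"]
    unfolding annN_def by (auto simp: smult_assoc1)
  thus "a \<otimes> r \<in> annN R M N x" using a r unfolding annN_def by (auto simp: m_comm)
qed

end



locale fgmod = module R M + noetherian_ring R for R (structure) and M +
  fixes xs
  assumes xs_car: "set xs \<subseteq> carrier M"
    and xs_span: "\<forall>x\<in>carrier M. \<exists>c. (\<forall>i<length xs. c i \<in> carrier R) \<and>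
            x = finsum M (\<lambda>i. c i \<odot>\<^bsub>M\<^esub> xs ! i) {..<length xs}"
begin

definition span :: "nat \<Rightarrow> _ set" where
  "span k = {finsum M (\<lambda>i. c i \<odot>\<^bsub>M\<^esub> xs ! i) {..<k} | c. \<forall>i<k. c i \<in> carrier R}"

lemma xs_nth: "i < length xs \<Longrightarrow> xs ! i \<in> carrier M"
  using xs_car by auto

lemma span_carrier: "k \<le> length xs \<Longrightarrow> span k \<subseteq> carrier M"
  unfolding span_def using xs_nth by (auto intro!: finsum_closed)

lemma span_smod:
  assumes k: "k \<le> length xs"
  shows "smod R M (span k)"
  unfolding smod_def
proof (intro conjI ballI)
  show "span k \<subseteq> carrier M" using span_carrier[OF k] .
  show "\<zero>\<^bsub>M\<^esub> \<in> span k"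
  proof -
    have "finsum M (\<lambda>i. \<zero>\<^bsub>R\<^esub> \<odot>\<^bsub>M\<^esub> xs ! i) {..<k} = finsum M (\<lambda>i. \<zero>\<^bsub>M\<^esub>) {..<k}"
      using k xs_nth by (intro finsum_cong') auto
    hence "finsum M (\<lambda>i. \<zero>\<^bsub>R\<^esub> \<odot>\<^bsub>M\<^esub> xs ! i) {..<k} = \<zero>\<^bsub>M\<^esub>" by simp
    thus ?thesis unfolding span_def
      by (intro CollectI exI[where x="\<lambda>i. \<zero>\<^bsub>R\<^esub>"]) simp
  qed
next
  fix x y assume "x \<in> span k" "y \<in> span k"
  then obtain c d where c: "\<forall>i<k. c i \<in> carrier R" "x = finsum M (\<lambda>i. c i \<odot>\<^bsub>M\<^esub> xs ! i) {..<k}"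
    and d: "\<forall>i<k. d i \<in> carrier R" "y = finsum M (\<lambda>i. d i \<odot>\<^bsub>M\<^esub> xs ! i) {..<k}"
    unfolding span_def by auto
  have f1: "(\<lambda>i. c i \<odot>\<^bsub>M\<^esub> xs ! i) \<in> {..<k} \<rightarrow> carrier M"
    using c(1) k xs_nth by (simp add: Pi_def)
  have f2: "(\<lambda>i. d i \<odot>\<^bsub>M\<^esub> xs ! i) \<in> {..<k} \<rightarrow> carrier M"
    using d(1) k xs_nth by (simp add: Pi_def)
  have f3: "(\<lambda>i. (c i \<oplus> d i) \<odot>\<^bsub>M\<^esub> xs ! i) \<in> {..<k} \<rightarrow> carrier M"
    using c(1) d(1) k xs_nth by (simp add: Pi_def)
  have "x \<oplus>\<^bsub>M\<^esub> y = finsum M (\<lambda>i. c i \<odot>\<^bsub>M\<^esub> xs ! i \<oplus>\<^bsub>M\<^esub> d i \<odot>\<^bsub>M\<^esub> xs ! i) {..<k}"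
    unfolding c(2) d(2) by (rule finsum_addf[OF f1 f2, symmetric])
  also have "\<dots> = finsum M (\<lambda>i. (c i \<oplus> d i) \<odot>\<^bsub>M\<^esub> xs ! i) {..<k}"
  proof (rule finsum_cong'[OF refl f3])
    fix i assume "i \<in> {..<k}"
    thus "c i \<odot>\<^bsub>M\<^esub> xs ! i \<oplus>\<^bsub>M\<^esub> d i \<odot>\<^bsub>M\<^esub> xs ! i = (c i \<oplus> d i) \<odot>\<^bsub>M\<^esub> xs ! i"
      using c(1) d(1) k xs_nth[of i] by (simp add: smult_l_distr)
  qed
  finally show "x \<oplus>\<^bsub>M\<^esub> y \<in> span k" unfolding span_def using c(1) d(1)
    by (intro CollectI exI[where x="\<lambda>i. c i \<oplus>\<^bsub>R\<^esub> d i"]) simp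
next
  fix a x assume a: "a \<in> carrier R" and "x \<in> span k"
  then obtain c where c: "\<forall>i<k. c i \<in> carrier R" "x = finsum M (\<lambda>i. c i \<odot>\<^bsub>M\<^esub> xs ! i) {..<k}"
    unfolding span_def by auto
  have f1: "(\<lambda>i. c i \<odot>\<^bsub>M\<^esub> xs ! i) \<in> {..<k} \<rightarrow> carrier M"
    using c(1) k xs_nth by (simp add: Pi_def)
  have f3: "(\<lambda>i. (a \<otimes> c i) \<odot>\<^bsub>M\<^esub> xs ! i) \<in> {..<k} \<rightarrow> carrier M"
    using c(1) a k xs_nth by (simp add: Pi_def)
  have "a \<odot>\<^bsub>M\<^esub> x = finsum M (\<lambda>i. a \<odot>\<^bsub>M\<^esub> (c i \<odot>\<^bsub>M\<^esub> xs ! i)) {..<k}"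
    unfolding c(2) by (rule finsum_smult_ldistr[OF _ a f1]) simp
  also have "\<dots> = finsum M (\<lambda>i. (a \<otimes> c i) \<odot>\<^bsub>M\<^esub> xs ! i) {..<k}"
  proof (rule finsum_cong'[OF refl f3])
    fix i assume "i \<in> {..<k}"
    thus "a \<odot>\<^bsub>M\<^esub> (c i \<odot>\<^bsub>M\<^esub> xs ! i) = (a \<otimes> c i) \<odot>\<^bsub>M\<^esub> xs ! i"
      using c(1) a k xs_nth[of i] by (simp add: smult_assoc1)
  qed
  finally show "a \<odot>\<^bsub>M\<^esub> x \<in> span k" unfolding span_def using c(1) a
    by (intro CollectI exI[where x="\<lambda>i. a \<otimes>\<^bsub>R\<^esub> c i"]) simp
qed

lemma span_0: "span 0 = {\<zero>\<^bsub>M\<^esub>}"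
  unfolding span_def by auto

lemma span_Suc_decomp:
  assumes k: "k < length xs" and z: "z \<in> span (Suc k)"
  shows "\<exists>a\<in>carrier R. \<exists>y\<in>span k. z = a \<odot>\<^bsub>M\<^esub> xs ! k \<oplus>\<^bsub>M\<^esub> y"
proof -
  obtain c where c: "\<forall>i<Suc k. c i \<in> carrier R" "z = finsum M (\<lambda>i. c i \<odot>\<^bsub>M\<^esub> xs ! i) {..<Suc k}"
    using z unfolding span_def by auto
  have "z = c k \<odot>\<^bsub>M\<^esub> xs ! k \<oplus>\<^bsub>M\<^esub> finsum M (\<lambda>i. c i \<odot>\<^bsub>M\<^esub> xs ! i) {..<k}"
    unfolding c(2) lessThan_Suc using c(1) k xs_nth
    by (subst finsum_insert) (auto simp: Pi_def)
  moreover have "finsum M (\<lambda>i. c i \<odot>\<^bsub>M\<^esub> xs ! i) {..<k} \<in> span k"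
    unfolding span_def using c(1) by auto
  ultimately show ?thesis using c(1) by auto
qed

lemma span_all: "span (length xs) = carrier M"
proof
  show "span (length xs) \<subseteq> carrier M" using span_carrier by simp
  show "carrier M \<subseteq> span (length xs)"
  proof
    fix x assume "x \<in> carrier M"
    then obtain c where "\<forall>i<length xs. c i \<in> carrier R"
      "x = finsum M (\<lambda>i. c i \<odot>\<^bsub>M\<^esub> xs ! i) {..<length xs}" using xs_span by blast
    thus "x \<in> span (length xs)" unfolding span_def by blast
  qed
qed

lemma acc_span:
  "k \<le> length xs \<Longrightarrow> C \<noteq> {} \<Longrightarrow> subset.chain {T. smod R M T \<and> T \<subseteq> span k} C \<Longrightarrow> \<Union>C \<in> C"
proof (induction k arbitrary: C)
  case 0
  have all0: "T = {\<zero>\<^bsub>M\<^esub>}" if T: "T \<in> C" for T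
  proof -
    have sT: "smod R M T" and Ts: "T \<subseteq> span 0" using 0(3) T unfolding subset_chain_def by auto
    have "\<zero>\<^bsub>M\<^esub> \<in> T" by (rule smodD(2)[OF sT])
    thus ?thesis using Ts unfolding span_0 by auto
  qed
  obtain T0 where T0: "T0 \<in> C" using 0(2) by auto
  have "\<Union>C = T0"
  proof
    show "\<Union>C \<subseteq> T0" using all0 T0 by auto
    show "T0 \<subseteq> \<Union>C" using T0 by auto
  qed
  then show ?case using T0 by simp
next
  case (Suc k)
  define g where "g = xs ! k"
  have k: "k < length xs" "k \<le> length xs" using Suc.prems by auto
  have g: "g \<in> carrier M" unfolding g_def using xs_nth k by auto
  have Csm: "\<And>T. T \<in> C \<Longrightarrow> smod R M T \<and> T \<subseteq> span (Suc k)"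
    using Suc.prems(3) unfolding subset_chain_def by auto
  have Cch: "T \<subseteq> T' \<or> T' \<subseteq> T" if "T \<in> C" "T' \<in> C" for T T'
  proof -
    show ?thesis
      using Suc.prems(3) that unfolding subset_chain_def by blast
  qed
  define I where "I T = {a \<in> carrier R. \<exists>y\<in>span k. a \<odot>\<^bsub>M\<^esub> g \<oplus>\<^bsub>M\<^esub> y \<in> T}" for T
  have spk: "smod R M (span k)" using span_smod k by auto
  have I_ideal: "ideal (I T) R" if T: "T \<in> C" for T
  proof -
    have sT: "smod R M T" using Csm T by auto
    have spc: "span k \<subseteq> carrier M" using smodD(1)[OF spk] .
    show ?thesis
    proof (rule idealI)
      show "ring R" by (rule ring_axioms)
      show "subgroup (I T) (add_monoid R)"
      proof (rule subgroup.intro)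
        show "I T \<subseteq> carrier (add_monoid R)" unfolding I_def by auto
        show "\<one>\<^bsub>add_monoid R\<^esub> \<in> I T" unfolding I_def using g smodD[OF spk] smodD[OF sT]
          by (auto intro!: bexI[of _ "\<zero>\<^bsub>M\<^esub>"])
        fix a b assume a: "a \<in> I T" and b: "b \<in> I T"
        then obtain y y' where y: "y \<in> span k" "a \<odot>\<^bsub>M\<^esub> g \<oplus>\<^bsub>M\<^esub> y \<in> T"
          and y': "y' \<in> span k" "b \<odot>\<^bsub>M\<^esub> g \<oplus>\<^bsub>M\<^esub> y' \<in> T" and ab: "a \<in> carrier R" "b \<in> carrier R"
          unfolding I_def by auto
        have yc: "y \<in> carrier M" "y' \<in> carrier M" using y y' spc by auto
        have "(a \<oplus> b) \<odot>\<^bsub>M\<^esub> g \<oplus>\<^bsub>M\<^esub> (y \<oplus>\<^bsub>M\<^esub> y') = (a \<odot>\<^bsub>M\<^esub> g \<oplus>\<^bsub>M\<^esub> y) \<oplus>\<^bsub>M\<^esub> (b \<odot>\<^bsub>M\<^esub> g \<oplus>\<^bsub>M\<^esub> y')"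
          using ab yc g by (simp add: smult_l_distr M.a_ac)
        hence "(a \<oplus> b) \<odot>\<^bsub>M\<^esub> g \<oplus>\<^bsub>M\<^esub> (y \<oplus>\<^bsub>M\<^esub> y') \<in> T" using smodD(3)[OF sT] y y' by simp
        moreover have "y \<oplus>\<^bsub>M\<^esub> y' \<in> span k" using smodD(3)[OF spk] y y' by auto
        ultimately show "a \<otimes>\<^bsub>add_monoid R\<^esub> b \<in> I T" unfolding I_def using ab by auto
      next
        fix a assume a: "a \<in> I T"
        then obtain y where y: "y \<in> span k" "a \<odot>\<^bsub>M\<^esub> g \<oplus>\<^bsub>M\<^esub> y \<in> T" and ac: "a \<in> carrier R"
          unfolding I_def by auto
        have yc: "y \<in> carrier M" using y spc by auto
        have "(\<ominus> a) \<odot>\<^bsub>M\<^esub> g \<oplus>\<^bsub>M\<^esub> (\<ominus>\<^bsub>M\<^esub> y) = \<ominus>\<^bsub>M\<^esub> (a \<odot>\<^bsub>M\<^esub> g \<oplus>\<^bsub>M\<^esub> y)"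
          using ac yc g by (simp add: smult_l_minus M.minus_add M.a_ac)
        hence "(\<ominus> a) \<odot>\<^bsub>M\<^esub> g \<oplus>\<^bsub>M\<^esub> (\<ominus>\<^bsub>M\<^esub> y) \<in> T" using smod_neg[OF sT] y by simp
        moreover have "\<ominus>\<^bsub>M\<^esub> y \<in> span k" using smod_neg[OF spk] y by auto
        ultimately show "inv\<^bsub>add_monoid R\<^esub> a \<in> I T" unfolding I_def using ac
          by (auto simp: a_inv_def[symmetric])
      qed
    next
      fix a r assume a: "a \<in> I T" and r: "r \<in> carrier R"
      then obtain y where y: "y \<in> span k" "a \<odot>\<^bsub>M\<^esub> g \<oplus>\<^bsub>M\<^esub> y \<in> T" and ac: "a \<in> carrier R"
        unfolding I_def by auto
      have yc: "y \<in> carrier M" using y spc by auto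
      have "(r \<otimes> a) \<odot>\<^bsub>M\<^esub> g \<oplus>\<^bsub>M\<^esub> (r \<odot>\<^bsub>M\<^esub> y) = r \<odot>\<^bsub>M\<^esub> (a \<odot>\<^bsub>M\<^esub> g \<oplus>\<^bsub>M\<^esub> y)"
        using ac yc g r by (simp add: smult_r_distr smult_assoc1)
      hence "(r \<otimes> a) \<odot>\<^bsub>M\<^esub> g \<oplus>\<^bsub>M\<^esub> (r \<odot>\<^bsub>M\<^esub> y) \<in> T" using smodD(4)[OF sT] y r by simp
      moreover have "r \<odot>\<^bsub>M\<^esub> y \<in> span k" using smodD(4)[OF spk] y r by auto
      ultimately show "r \<otimes> a \<in> I T" unfolding I_def using ac r by auto
      thus "a \<otimes> r \<in> I T" using ac r by (simp add: m_comm)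
    qed
  qed
  have I_mono: "T \<subseteq> T' \<Longrightarrow> I T \<subseteq> I T'" for T T' unfolding I_def by auto
  have "\<Union>(I ` C) \<in> I ` C"
  proof (rule ideal_chain_is_trivial)
    show "I ` C \<noteq> {}" using Suc.prems by auto
    show "subset.chain {J0. ideal J0 R} (I ` C)"
      unfolding subset_chain_def
    proof (intro conjI ballI)
      show "I ` C \<subseteq> {J0. ideal J0 R}" using I_ideal by auto
      fix X Y assume "X \<in> I ` C" "Y \<in> I ` C"
      then obtain T T' where "T \<in> C" "T' \<in> C" "X = I T" "Y = I T'" by auto
      thus "X \<subseteq> Y \<or> Y \<subseteq> X" using Cch I_mono by metis
    qed
  qed
  then obtain T1 where T1: "T1 \<in> C" "\<Union>(I ` C) = I T1" by auto
  define J where "J T = T \<inter> span k" for T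
  have "\<Union>(J ` C) \<in> J ` C"
  proof (rule Suc.IH)
    show "k \<le> length xs" using k by auto
    show "J ` C \<noteq> {}" using Suc.prems by auto
    show "subset.chain {T. smod R M T \<and> T \<subseteq> span k} (J ` C)"
      unfolding subset_chain_def
    proof (intro conjI ballI)
      show "J ` C \<subseteq> {T. smod R M T \<and> T \<subseteq> span k}"
      proof
        fix U assume "U \<in> J ` C"
        then obtain T where T: "T \<in> C" "U = T \<inter> span k" unfolding J_def by auto
        have sT: "smod R M T" using Csm T by auto
        show "U \<in> {T. smod R M T \<and> T \<subseteq> span k}"
          using T smodD[OF sT] smodD[OF spk] unfolding smod_def by auto
      qed
      fix U U' assume "U \<in> J ` C" "U' \<in> J ` C"
      thus "U \<subseteq> U' \<or> U' \<subseteq> U" using Cch unfolding J_def by blast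
    qed
  qed
  then obtain T2 where T2: "T2 \<in> C" "\<Union>(J ` C) = J T2" by auto
  define T0 where "T0 = (if T1 \<subseteq> T2 then T2 else T1)"
  have T12: "T1 \<subseteq> T2 \<or> T2 \<subseteq> T1" using Cch T1(1) T2(1) by blast
  have T0: "T0 \<in> C" "T1 \<subseteq> T0" "T2 \<subseteq> T0" unfolding T0_def using T1(1) T2(1) T12 by auto
  have all_le: "T \<subseteq> T0" if T: "T \<in> C" for T
  proof (cases "T \<subseteq> T0")
    case True then show ?thesis .
  next
    case False
    hence T0T: "T0 \<subseteq> T" using Cch T T0 by blast
    have sT: "smod R M T" using Csm T by auto
    show ?thesis
    proof
      fix z assume z: "z \<in> T"
      have "z \<in> span (Suc k)" using z Csm T by auto
      then obtain a y where a: "a \<in> carrier R" and y: "y \<in> span k" and zd: "z = a \<odot>\<^bsub>M\<^esub> g \<oplus>\<^bsub>M\<^esub> y"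
        using span_Suc_decomp[OF k(1)] unfolding g_def by blast
      have "a \<in> I T" unfolding I_def using a y z zd by auto
      hence "a \<in> I T1" using T1 T by auto
      hence "a \<in> I T0" using I_mono T0 by auto
      then obtain y' where y': "y' \<in> span k" "a \<odot>\<^bsub>M\<^esub> g \<oplus>\<^bsub>M\<^esub> y' \<in> T0" unfolding I_def by auto
      have spc: "span k \<subseteq> carrier M" using smodD(1)[OF spk] .
      have yc: "y \<in> carrier M" "y' \<in> carrier M" using y y' spc by auto
      have eqz: "y \<ominus>\<^bsub>M\<^esub> y' = z \<ominus>\<^bsub>M\<^esub> (a \<odot>\<^bsub>M\<^esub> g \<oplus>\<^bsub>M\<^esub> y')"
        using zd yc g a by (simp add: a_minus_def M.minus_add M.a_ac M.r_neg M.r_neg2)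
      hence "y \<ominus>\<^bsub>M\<^esub> y' \<in> T" using smod_minus[OF sT] z y'(2) T0T by auto
      moreover have "y \<ominus>\<^bsub>M\<^esub> y' \<in> span k" using smod_minus[OF spk] y y' by auto
      ultimately have "y \<ominus>\<^bsub>M\<^esub> y' \<in> J T" unfolding J_def by auto
      hence "y \<ominus>\<^bsub>M\<^esub> y' \<in> J T2" using T2 T by auto
      hence yy: "y \<ominus>\<^bsub>M\<^esub> y' \<in> T0" unfolding J_def using T0 by auto
      have sT0: "smod R M T0" using Csm T0 by auto
      have zc: "z \<in> carrier M" using zd yc g a by simp
      have "z = (a \<odot>\<^bsub>M\<^esub> g \<oplus>\<^bsub>M\<^esub> y') \<oplus>\<^bsub>M\<^esub> (y \<ominus>\<^bsub>M\<^esub> y')"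
        unfolding eqz using zc yc g a by (simp add: add_minus_cancel)
      thus "z \<in> T0" using smodD(3)[OF sT0] y'(2) yy by simp
    qed
  qed
  hence "\<Union>C = T0" using T0 by auto
  thus ?case using T0 by simp
qed

lemma acc_smod:
  assumes "C \<noteq> {}" "subset.chain {T. smod R M T} C"
  shows "\<Union>C \<in> C"
proof (rule acc_span[of "length xs"])
  show "subset.chain {T. smod R M T \<and> T \<subseteq> span (length xs)} C"
    using assms(2) unfolding span_all subset_chain_def smod_def by auto
qed (use assms in auto)

lemma max_smod:
  assumes "F \<noteq> {}" "\<And>T. T \<in> F \<Longrightarrow> smod R M T"
  shows "\<exists>T\<in>F. \<forall>T'\<in>F. T \<subseteq> T' \<longrightarrow> T' = T"
proof (rule subset_Zorn_nonempty[OF assms(1)])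
  fix C assume C: "C \<noteq> {}" "subset.chain F C"
  have CF: "C \<subseteq> F" using C(2) unfolding subset_chain_def by auto
  have "subset.chain {T. smod R M T} C"
    using C(2) assms(2) unfolding subset_chain_def by auto
  hence "\<Union>C \<in> C" using acc_smod C(1) by auto
  thus "\<Union>C \<in> F" using CF by auto
qed

lemma max_ideal_fam:
  assumes "F \<noteq> {}" "\<And>I. I \<in> F \<Longrightarrow> ideal I R"
  shows "\<exists>I\<in>F. \<forall>I'\<in>F. I \<subseteq> I' \<longrightarrow> I' = I"
proof (rule subset_Zorn_nonempty[OF assms(1)])
  fix C assume C: "C \<noteq> {}" "subset.chain F C"
  have CF: "C \<subseteq> F" using C(2) unfolding subset_chain_def by auto
  have "subset.chain {I. ideal I R} C"
    using C(2) assms(2) unfolding subset_chain_def by auto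
  hence "\<Union>C \<in> C" using ideal_chain_is_trivial C(1) by auto
  thus "\<Union>C \<in> F" using CF by auto
qed

end



lemma quot_finsum: "finsum (quot_module R P) f A = finsum (R Quot P) f A"
  by (simp add: finsum_def finprod_def quot_module_def)

lemma quot_smult: "smult (quot_module R P) a C = (P +>\<^bsub>R\<^esub> a) \<otimes>\<^bsub>R Quot P\<^esub> C"
  by (simp add: quot_module_def)

lemma quot_carrier: "carrier (quot_module R P) = carrier (R Quot P)"
  by (simp add: quot_module_def)

lemma quot_zero: "zero (quot_module R P) = P"
  by (simp add: quot_module_def FactRing_def)

lemma FactRing_carrier_rep:
  assumes "C \<in> carrier (R Quot P)"
  shows "\<exists>c\<in>carrier R. C = P +>\<^bsub>R\<^esub> c"
  using assms by (auto simp: FactRing_def A_RCOSETS_def RCOSETS_def a_r_coset_def)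

lemma FactRing_carrier_coset:
  assumes "c \<in> carrier R"
  shows "P +>\<^bsub>R\<^esub> c \<in> carrier (R Quot P)"
  using assms by (auto simp: FactRing_def A_RCOSETS_def RCOSETS_def a_r_coset_def)

context cring
begin

lemma coset_eq_zero_iff:
  assumes "ideal P R" "c \<in> carrier R"
  shows "P +> c = P \<longleftrightarrow> c \<in> P"
proof -
  have "P +> \<zero> = P"
    using assms(1) by (simp add: a_rcos_zero additive_subgroup.zero_closed ideal.axioms(1))
  hence "P +> c = P \<longleftrightarrow> P +> c = P +> \<zero>" by simp
  also have "\<dots> \<longleftrightarrow> c \<ominus> \<zero> \<in> P" using quotient_eq_iff_same_a_r_cos[OF assms(1) assms(2)] by simp
  also have "\<dots> \<longleftrightarrow> c \<in> P" using assms(2) by (simp add: a_minus_def)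
  finally show ?thesis .
qed

lemma quot_mat_apply:
  assumes P: "ideal P R" and Ai: "\<forall>j<l. A i j \<in> carrier R" and c: "\<forall>j<l. c j \<in> carrier R"
    and m: "\<forall>j<l. m j = P +> c j"
  shows "mat_apply (quot_module R P) A l m i = P +> (\<Oplus>j\<in>{..<l}. A i j \<otimes> c j)"
proof -
  interpret Q: ring "R Quot P" using ideal.quotient_is_ring[OF P] .
  interpret h: ring_hom_cring R "R Quot P" "(+>) P"
    using ideal.rcos_ring_hom_cring[OF P is_cring] .
  have "mat_apply (quot_module R P) A l m i = finsum (R Quot P) (\<lambda>j. (P +> A i j) \<otimes>\<^bsub>R Quot P\<^esub> m j) {..<l}"
    unfolding mat_apply_def quot_finsum quot_smult ..
  also have "\<dots> = finsum (R Quot P) ((+>) P \<circ> (\<lambda>j. A i j \<otimes> c j)) {..<l}"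
  proof (rule Q.finsum_cong'[OF refl])
    show "(+>) P \<circ> (\<lambda>j. A i j \<otimes> c j) \<in> {..<l} \<rightarrow> carrier (R Quot P)"
      using Ai c by (auto intro!: FactRing_carrier_coset)
    fix j assume "j \<in> {..<l}"
    thus "(P +> A i j) \<otimes>\<^bsub>R Quot P\<^esub> m j = ((+>) P \<circ> (\<lambda>j. A i j \<otimes> c j)) j"
      using Ai c m by simp
  qed
  also have "\<dots> = P +> (\<Oplus>j\<in>{..<l}. A i j \<otimes> c j)"
    by (rule h.hom_finsum[symmetric]) (use Ai c in auto)
  finally show ?thesis .
qed

end

locale pmod = module R M for R :: "'a ring" (structure) and M :: "('a, 'b) module"
begin

lemma PR_from_assoc:
  assumes Am: "matrix_over R A k l" and P: "primeideal P R" and x: "x \<in> carrier M"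
    and Px: "P = annihilator R M x"
    and PR: "partition_regular (quot_module R P) A k l"
  shows "partition_regular M A k l"
  unfolding partition_regular_def partition_regular_for_def
proof (intro allI impI)
  fix r :: nat and \<chi> :: "'b \<Rightarrow> nat"
  assume r: "r \<ge> 1" and \<chi>: "\<chi> ` carrier M \<subseteq> {1..r}"
  have Pi: "ideal P R" using P by (simp add: primeideal_def)
  define rep where "rep C = (SOME c. c \<in> carrier R \<and> C = P +> c)" for C
  have rep: "rep C \<in> carrier R \<and> C = P +> rep C" if "C \<in> carrier (R Quot P)" for C
    unfolding rep_def using FactRing_carrier_rep[OF that] by (rule someI2_bex) auto
  define \<chi>' where "\<chi>' C = \<chi> (rep C \<odot>\<^bsub>M\<^esub> x)" for C
  have \<chi>': "\<chi>' ` carrier (quot_module R P) \<subseteq> {1..r}"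
    using \<chi> rep x unfolding \<chi>'_def quot_carrier by auto
  have "partition_regular_for (quot_module R P) A k l r" using PR r unfolding partition_regular_def by blast
  note ex = this[unfolded partition_regular_for_def, rule_format, OF \<chi>']
  obtain m' where m'c: "\<forall>j<l. m' j \<in> carrier (quot_module R P)"
    and m'0: "\<forall>i<k. mat_apply (quot_module R P) A l m' i = \<zero>\<^bsub>quot_module R P\<^esub>"
    and m'nz: "\<exists>j<l. m' j \<noteq> \<zero>\<^bsub>quot_module R P\<^esub>"
    and m'col: "\<exists>c. \<forall>j<l. \<chi>' (m' j) = c"
    using ex by auto
  define c where "c j = rep (m' j)" for j
  have c: "\<forall>j<l. c j \<in> carrier R" and mc: "\<forall>j<l. m' j = P +> c j"
    using rep m'c unfolding c_def quot_carrier by auto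
  define m where "m j = c j \<odot>\<^bsub>M\<^esub> x" for j
  show "\<exists>m. (\<forall>j<l. m j \<in> carrier M) \<and> (\<forall>i<k. mat_apply M A l m i = \<zero>\<^bsub>M\<^esub>) \<and>
      (\<exists>j<l. m j \<noteq> \<zero>\<^bsub>M\<^esub>) \<and> (\<exists>c. \<forall>j<l. \<chi> (m j) = c)"
  proof (rule exI[where x=m], intro conjI)
    show "\<forall>j<l. m j \<in> carrier M" using c x unfolding m_def by auto
    show "\<forall>i<k. mat_apply M A l m i = \<zero>\<^bsub>M\<^esub>"
    proof (intro allI impI)
      fix i assume i: "i < k"
      have Ai: "\<forall>j<l. A i j \<in> carrier R" using Am i unfolding matrix_over_def by auto
      have "P +> (\<Oplus>j\<in>{..<l}. A i j \<otimes> c j) = P"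
        using quot_mat_apply[where P=P and l=l and A=A and i=i and c=c and m=m', OF Pi Ai c mc] m'0 i by (simp add: quot_zero)
      hence inP: "(\<Oplus>j\<in>{..<l}. A i j \<otimes> c j) \<in> P"
        using coset_eq_zero_iff[OF Pi] Ai c by (simp add: Pi_def)
      have "mat_apply M A l m i = finsum M (\<lambda>j. (A i j \<otimes> c j) \<odot>\<^bsub>M\<^esub> x) {..<l}"
        unfolding mat_apply_def m_def
        by (rule finsum_cong'[OF refl]) (use Ai c x in \<open>auto simp: smult_assoc1\<close>)
      also have "\<dots> = (\<Oplus>j\<in>{..<l}. A i j \<otimes> c j) \<odot>\<^bsub>M\<^esub> x"
        by (rule finsum_smult_rdistr) (use Ai c x in auto)
      also have "\<dots> = \<zero>\<^bsub>M\<^esub>" using inP unfolding Px annihilator_def by auto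
      finally show "mat_apply M A l m i = \<zero>\<^bsub>M\<^esub>" .
    qed
    show "\<exists>j<l. m j \<noteq> \<zero>\<^bsub>M\<^esub>"
    proof -
      obtain j where j: "j < l" "m' j \<noteq> P" using m'nz by (auto simp: quot_zero)
      hence "c j \<notin> P" using coset_eq_zero_iff[OF Pi] c mc by auto
      hence "m j \<noteq> \<zero>\<^bsub>M\<^esub>" using c j unfolding m_def Px annihilator_def by auto
      thus ?thesis using j by auto
    qed
    show "\<exists>c. \<forall>j<l. \<chi> (m j) = c" using m'col unfolding m_def \<chi>'_def c_def by auto
  qed
qed

end



lemma (in abelian_group) eq_shift:
  assumes "n \<in> carrier G" "u \<in> carrier G" "n' \<in> carrier G" "u' \<in> carrier G" "n \<oplus> u = n' \<oplus> u'"
  shows "u \<ominus> u' = n' \<ominus> n"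
  by (metis (lifting) ext a_assoc a_comm abelian_group.r_neg2
    abelian_group_axioms add.l_inv_ex assms(1,2,3,4,5) minus_closed minus_eq
    minus_equality)

definition relPR :: "('a, 'b) module \<Rightarrow> (nat \<Rightarrow> nat \<Rightarrow> 'a) \<Rightarrow> nat \<Rightarrow> nat \<Rightarrow> 'b set \<Rightarrow> nat \<Rightarrow> bool" where
  "relPR M A k l N r \<longleftrightarrow>
     (\<forall>\<chi> :: 'b \<Rightarrow> nat. \<chi> ` carrier M \<subseteq> {1..r} \<longrightarrow>
        (\<forall>x\<in>carrier M. \<forall>y\<in>carrier M. x \<ominus>\<^bsub>M\<^esub> y \<in> N \<longrightarrow> \<chi> x = \<chi> y) \<longrightarrow>
        (\<exists>m :: nat \<Rightarrow> 'b. (\<forall>j<l. m j \<in> carrier M)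
           \<and> (\<forall>i<k. mat_apply M A l m i \<in> N)
           \<and> (\<exists>j<l. m j \<notin> N)
           \<and> (\<exists>c. \<forall>j<l. \<chi> (m j) = c)))"

definition inv_ok :: "'a ring \<Rightarrow> ('a, 'b) module \<Rightarrow> 'b set \<Rightarrow> bool" where
  "inv_ok R M N \<longleftrightarrow> (\<forall>z\<in>carrier M - N. primeideal (annN R M N z) R \<longrightarrow> associated_prime R M (annN R M N z))"

lemma decode_pair:
  fixes a a' b b' r :: nat
  assumes "a \<in> {1..r}" "a' \<in> {1..r}" "a + r * b = a' + r * b'"
  shows "a = a' \<and> b = b'"
proof -
  have r: "r \<ge> 1" using assms(1) by auto
  have "(a - 1) + r * b = (a' - 1) + r * b'" using assms by auto
  hence "((a - 1) + r * b) div r = ((a' - 1) + r * b') div r"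
    "((a - 1) + r * b) mod r = ((a' - 1) + r * b') mod r" by simp_all
  moreover have "a - 1 < r" "a' - 1 < r" using assms by auto
  ultimately show ?thesis using r assms(1,2) by auto
qed

locale mctx = fgmod R M xs for R :: "'a ring" (structure) and M :: "('a, 'b) module" and xs
begin

sublocale pmod R M by unfold_locales

lemma relPR_zero:
  assumes "partition_regular M A k l" "r \<ge> 1"
  shows "relPR M A k l {\<zero>\<^bsub>M\<^esub>} r"
  unfolding relPR_def
proof (intro allI impI)
  fix \<chi> :: "'b \<Rightarrow> nat" assume \<chi>: "\<chi> ` carrier M \<subseteq> {1..r}"
  have "partition_regular_for M A k l r" using assms unfolding partition_regular_def by blast
  note ex = this[unfolded partition_regular_for_def, rule_format, OF \<chi>]
  then obtain m where "\<forall>j<l. m j \<in> carrier M" "\<forall>i<k. mat_apply M A l m i = \<zero>\<^bsub>M\<^esub>"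
    "\<exists>j<l. m j \<noteq> \<zero>\<^bsub>M\<^esub>" "\<exists>c. \<forall>j<l. \<chi> (m j) = c" by auto
  thus "\<exists>m. (\<forall>j<l. m j \<in> carrier M) \<and> (\<forall>i<k. mat_apply M A l m i \<in> {\<zero>\<^bsub>M\<^esub>}) \<and>
      (\<exists>j<l. m j \<notin> {\<zero>\<^bsub>M\<^esub>}) \<and> (\<exists>c. \<forall>j<l. \<chi> (m j) = c)" by auto
qed

lemma relPR_full:
  assumes "r \<ge> 1"
  shows "\<not> relPR M A k l (carrier M) r"
proof
  assume "relPR M A k l (carrier M) r"
  note ex = this[unfolded relPR_def, rule_format, of "\<lambda>_. 1"]
  have "\<exists>m. (\<forall>j<l. m j \<in> carrier M) \<and> (\<forall>i<k. mat_apply M A l m i \<in> carrier M) \<and>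
      (\<exists>j<l. m j \<notin> carrier M) \<and> (\<exists>c. \<forall>j<l. (1::nat) = c)"
    by (rule ex) (use assms in auto)
  thus False by auto
qed

lemma inv_ok_zero: "inv_ok R M {\<zero>\<^bsub>M\<^esub>}"
  unfolding inv_ok_def associated_prime_def
proof (intro ballI impI conjI)
  fix z assume z: "z \<in> carrier M - {\<zero>\<^bsub>M\<^esub>}" and "primeideal (annN R M {\<zero>\<^bsub>M\<^esub>} z) R"
  thus "primeideal (annN R M {\<zero>\<^bsub>M\<^esub>} z) R" by simp
  have "annN R M {\<zero>\<^bsub>M\<^esub>} z = annihilator R M z" unfolding annN_def annihilator_def by auto
  thus "\<exists>x\<in>carrier M. annN R M {\<zero>\<^bsub>M\<^esub>} z = annihilator R M x" using z by auto
qed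

lemma smod_zero: "smod R M {\<zero>\<^bsub>M\<^esub>}"
  unfolding smod_def by auto

end



locale stepctx = mctx R M xs for R :: "'a ring" (structure) and M :: "('a, 'b) module" and xs +
  fixes N
  assumes N_smod: "smod R M N"
    and N_inv: "inv_ok R M N"
    and N_ne: "N \<noteq> carrier M"
begin

lemma N_car: "N \<subseteq> carrier M" using smodD(1)[OF N_smod] .

definition x0 where
  "x0 = (SOME x. x \<in> carrier M - N \<and>
     (\<forall>y\<in>carrier M - N. annN R M N x \<subseteq> annN R M N y \<longrightarrow> annN R M N y = annN R M N x))"

lemma x0_ex: "\<exists>x. x \<in> carrier M - N \<and>
     (\<forall>y\<in>carrier M - N. annN R M N x \<subseteq> annN R M N y \<longrightarrow> annN R M N y = annN R M N x)"
proof -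
  define F where "F = (annN R M N) ` (carrier M - N)"
  have "F \<noteq> {}" using N_ne N_car unfolding F_def by auto
  moreover have "\<And>I. I \<in> F \<Longrightarrow> ideal I R" unfolding F_def using annN_ideal[OF N_smod] by auto
  ultimately obtain I where I: "I \<in> F" "\<forall>I'\<in>F. I \<subseteq> I' \<longrightarrow> I' = I"
    using max_ideal_fam by blast
  then obtain x where x: "x \<in> carrier M - N" "I = annN R M N x" unfolding F_def by auto
  show ?thesis
    by (rule exI[where x=x]) (use x I in \<open>auto simp: F_def\<close>)
qed

lemma x0: "x0 \<in> carrier M" "x0 \<notin> N"
  "\<And>y. y \<in> carrier M - N \<Longrightarrow> annN R M N x0 \<subseteq> annN R M N y \<Longrightarrow> annN R M N y = annN R M N x0"
  using someI_ex[OF x0_ex] unfolding x0_def[symmetric] by blast+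

definition q where "q = annN R M N x0"

lemma q_ideal: "ideal q R" unfolding q_def using annN_ideal[OF N_smod x0(1)] .

lemma q_car: "q \<subseteq> carrier R" unfolding q_def annN_def by auto

lemma q_max: "y \<in> carrier M - N \<Longrightarrow> q \<subseteq> annN R M N y \<Longrightarrow> annN R M N y = q"
  unfolding q_def using x0(3) by blast

lemma q_prime: "primeideal q R"
proof (rule primeidealI[OF q_ideal is_cring])
  show "carrier R \<noteq> q"
  proof
    assume "carrier R = q"
    hence "\<one> \<in> q" by auto
    thus False unfolding q_def annN_def using x0 by auto
  qed
next
  fix a b assume a: "a \<in> carrier R" and b: "b \<in> carrier R" and ab: "a \<otimes> b \<in> q"
  show "a \<in> q \<or> b \<in> q"
  proof (cases "a \<in> q")
    case True then show ?thesis by simp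
  next
    case False
    hence na: "a \<notin> q" .
    define w where "w = a \<odot>\<^bsub>M\<^esub> x0"
    have w: "w \<in> carrier M" "w \<notin> N" using na a x0 unfolding w_def q_def annN_def by auto
    have "q \<subseteq> annN R M N w"
    proof
      fix r assume r: "r \<in> q"
      have rc: "r \<in> carrier R" using r q_car by auto
      have "r \<odot>\<^bsub>M\<^esub> w = a \<odot>\<^bsub>M\<^esub> (r \<odot>\<^bsub>M\<^esub> x0)"
        unfolding w_def using a rc x0 by (simp add: smult_assoc1[symmetric] m_comm)
      moreover have "r \<odot>\<^bsub>M\<^esub> x0 \<in> N" using r unfolding q_def annN_def by auto
      ultimately show "r \<in> annN R M N w" using smodD(4)[OF N_smod a] rc unfolding annN_def by auto
    qed
    hence eq: "annN R M N w = q" using q_max w by auto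
    have "b \<odot>\<^bsub>M\<^esub> w = (a \<otimes> b) \<odot>\<^bsub>M\<^esub> x0"
      unfolding w_def using a b x0 by (simp add: smult_assoc1[symmetric] m_comm)
    hence "b \<in> annN R M N w" using ab b unfolding q_def annN_def by auto
    thus ?thesis using eq by simp
  qed
qed

lemma q_assoc: "associated_prime R M q"
  using N_inv q_prime x0 unfolding inv_ok_def q_def by auto

definition N' where "N' = {y \<in> carrier M. \<forall>a\<in>q. a \<odot>\<^bsub>M\<^esub> y \<in> N}"

lemma N'_ann:
  assumes "y \<in> N'" "y \<notin> N"
  shows "annN R M N y = q"
proof -
  have "q \<subseteq> annN R M N y" using assms q_car unfolding N'_def annN_def by auto
  moreover have "y \<in> carrier M - N" using assms unfolding N'_def by auto
  ultimately show ?thesis using q_max by auto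
qed

definition val where "val s y c \<longleftrightarrow> c \<in> carrier R \<and> (\<exists>n\<in>N. s \<odot>\<^bsub>M\<^esub> y = n \<oplus>\<^bsub>M\<^esub> c \<odot>\<^bsub>M\<^esub> x0)"

lemma val_sum:
  assumes "val s y c" "val s y' c'" "s \<in> carrier R" "y \<in> carrier M" "y' \<in> carrier M"
  shows "val s (y \<oplus>\<^bsub>M\<^esub> y') (c \<oplus> c')"
proof -
  obtain n n' where n: "n \<in> N" "s \<odot>\<^bsub>M\<^esub> y = n \<oplus>\<^bsub>M\<^esub> c \<odot>\<^bsub>M\<^esub> x0"
    and n': "n' \<in> N" "s \<odot>\<^bsub>M\<^esub> y' = n' \<oplus>\<^bsub>M\<^esub> c' \<odot>\<^bsub>M\<^esub> x0"
    and c: "c \<in> carrier R" "c' \<in> carrier R" using assms(1,2) unfolding val_def by auto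
  have nc: "n \<in> carrier M" "n' \<in> carrier M" using n n' N_car by auto
  have "s \<odot>\<^bsub>M\<^esub> (y \<oplus>\<^bsub>M\<^esub> y') = (n \<oplus>\<^bsub>M\<^esub> n') \<oplus>\<^bsub>M\<^esub> (c \<oplus> c') \<odot>\<^bsub>M\<^esub> x0"
    using assms(3-5) n(2) n'(2) nc c x0(1) by (simp add: smult_r_distr smult_l_distr M.a_ac)
  moreover have "n \<oplus>\<^bsub>M\<^esub> n' \<in> N" using smodD(3)[OF N_smod] n n' by auto
  ultimately show ?thesis unfolding val_def using c by auto
qed

lemma val_smult:
  assumes "val s y c" "a \<in> carrier R" "s \<in> carrier R" "y \<in> carrier M"
  shows "val s (a \<odot>\<^bsub>M\<^esub> y) (a \<otimes> c)"
proof -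
  obtain n where n: "n \<in> N" "s \<odot>\<^bsub>M\<^esub> y = n \<oplus>\<^bsub>M\<^esub> c \<odot>\<^bsub>M\<^esub> x0"
    and c: "c \<in> carrier R" using assms(1) unfolding val_def by auto
  have nc: "n \<in> carrier M" using n N_car by auto
  have "s \<odot>\<^bsub>M\<^esub> (a \<odot>\<^bsub>M\<^esub> y) = a \<odot>\<^bsub>M\<^esub> (s \<odot>\<^bsub>M\<^esub> y)"
    using assms(2-4) by (simp add: smult_assoc1[symmetric] m_comm)
  also have "\<dots> = a \<odot>\<^bsub>M\<^esub> n \<oplus>\<^bsub>M\<^esub> (a \<otimes> c) \<odot>\<^bsub>M\<^esub> x0"
    using n(2) assms(2) nc c x0(1) by (simp add: smult_r_distr smult_assoc1)
  finally show ?thesis unfolding val_def using smodD(4)[OF N_smod assms(2) n(1)] c assms(2) by auto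
qed

lemma val_N:
  assumes "y \<in> N" "s \<in> carrier R"
  shows "val s y \<zero>"
proof -
  have "s \<odot>\<^bsub>M\<^esub> y = s \<odot>\<^bsub>M\<^esub> y \<oplus>\<^bsub>M\<^esub> \<zero> \<odot>\<^bsub>M\<^esub> x0"
    using assms N_car x0(1) by auto
  thus ?thesis unfolding val_def using smodD(4)[OF N_smod assms(2,1)] by auto
qed

lemma val_unique:
  assumes "val s y c" "val s y c'"
  shows "c \<ominus> c' \<in> q"
proof -
  obtain n n' where n: "n \<in> N" "s \<odot>\<^bsub>M\<^esub> y = n \<oplus>\<^bsub>M\<^esub> c \<odot>\<^bsub>M\<^esub> x0"
    and n': "n' \<in> N" "s \<odot>\<^bsub>M\<^esub> y = n' \<oplus>\<^bsub>M\<^esub> c' \<odot>\<^bsub>M\<^esub> x0"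
    and c: "c \<in> carrier R" "c' \<in> carrier R" using assms unfolding val_def by auto
  have nc: "n \<in> carrier M" "n' \<in> carrier M" using n n' N_car by auto
  have "c \<odot>\<^bsub>M\<^esub> x0 \<ominus>\<^bsub>M\<^esub> c' \<odot>\<^bsub>M\<^esub> x0 = n' \<ominus>\<^bsub>M\<^esub> n"
    by (rule M.eq_shift) (use n n' nc c x0(1) in auto)
  moreover have "(c \<ominus> c') \<odot>\<^bsub>M\<^esub> x0 = c \<odot>\<^bsub>M\<^esub> x0 \<ominus>\<^bsub>M\<^esub> c' \<odot>\<^bsub>M\<^esub> x0"
    unfolding R.minus_eq M.minus_eq using c x0(1) by (simp add: smult_l_distr smult_l_minus)
  ultimately have "(c \<ominus> c') \<odot>\<^bsub>M\<^esub> x0 \<in> N" using smod_minus[OF N_smod n'(1) n(1)] by simp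
  thus ?thesis unfolding q_def annN_def using c by auto
qed

lemma val_mult:
  assumes "val s (t \<odot>\<^bsub>M\<^esub> y) c" "s \<in> carrier R" "t \<in> carrier R" "y \<in> carrier M"
  shows "val (s \<otimes> t) y c"
  using assms unfolding val_def by (simp add: smult_assoc1)

lemma val_mult2:
  assumes "val s y c" "s \<in> carrier R" "t \<in> carrier R" "y \<in> carrier M"
  shows "val (t \<otimes> s) y (t \<otimes> c)"
proof -
  have "val s (t \<odot>\<^bsub>M\<^esub> y) (t \<otimes> c)" by (rule val_smult) (use assms in auto)
  hence "val (s \<otimes> t) y (t \<otimes> c)" by (rule val_mult) (use assms in auto)
  thus ?thesis using assms by (simp add: m_comm)
qed

definition T where "T s = {y \<in> N'. \<exists>c. val s y c}"

lemma N'_car: "N' \<subseteq> carrier M" unfolding N'_def by auto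

lemma N'_smod: "smod R M N'"
  unfolding smod_def
proof (intro conjI ballI)
  show "N' \<subseteq> carrier M" by (rule N'_car)
  show "\<zero>\<^bsub>M\<^esub> \<in> N'" unfolding N'_def using q_car smodD(2)[OF N_smod] by auto
  fix y y' assume y: "y \<in> N'" and y': "y' \<in> N'"
  show "y \<oplus>\<^bsub>M\<^esub> y' \<in> N'" unfolding N'_def
  proof (intro CollectI conjI ballI)
    show "y \<oplus>\<^bsub>M\<^esub> y' \<in> carrier M" using y y' N'_car by auto
    fix a assume a: "a \<in> q"
    have ac: "a \<in> carrier R" using a q_car by auto
    have yc: "y \<in> carrier M" "y' \<in> carrier M" using y y' N'_car by auto
    have "a \<odot>\<^bsub>M\<^esub> (y \<oplus>\<^bsub>M\<^esub> y') = a \<odot>\<^bsub>M\<^esub> y \<oplus>\<^bsub>M\<^esub> a \<odot>\<^bsub>M\<^esub> y'"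
      using ac yc by (simp add: smult_r_distr)
    thus "a \<odot>\<^bsub>M\<^esub> (y \<oplus>\<^bsub>M\<^esub> y') \<in> N" using smodD(3)[OF N_smod] a y y' unfolding N'_def by auto
  qed
next
  fix b y assume b: "b \<in> carrier R" and y: "y \<in> N'"
  show "b \<odot>\<^bsub>M\<^esub> y \<in> N'" unfolding N'_def
  proof (intro CollectI conjI ballI)
    show "b \<odot>\<^bsub>M\<^esub> y \<in> carrier M" using b y N'_car by auto
    fix a assume a: "a \<in> q"
    have ac: "a \<in> carrier R" using a q_car by auto
    have yc: "y \<in> carrier M" using y N'_car by auto
    have "a \<odot>\<^bsub>M\<^esub> (b \<odot>\<^bsub>M\<^esub> y) = b \<odot>\<^bsub>M\<^esub> (a \<odot>\<^bsub>M\<^esub> y)"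
      using ac yc b by (simp add: smult_assoc1[symmetric] m_comm)
    thus "a \<odot>\<^bsub>M\<^esub> (b \<odot>\<^bsub>M\<^esub> y) \<in> N" using smodD(4)[OF N_smod b] a y unfolding N'_def by auto
  qed
qed

lemma T_smod:
  assumes s: "s \<in> carrier R"
  shows "smod R M (T s)"
  unfolding smod_def
proof (intro conjI ballI)
  show "T s \<subseteq> carrier M" unfolding T_def using N'_car by auto
  have "val s \<zero>\<^bsub>M\<^esub> \<zero>" using val_N[OF smodD(2)[OF N_smod] s] .
  thus "\<zero>\<^bsub>M\<^esub> \<in> T s" unfolding T_def using smodD(2)[OF N'_smod] by auto
  fix y y' assume y: "y \<in> T s" and y': "y' \<in> T s"
  obtain c c' where v: "val s y c" "val s y' c'" using y y' unfolding T_def by auto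
  have yN: "y \<in> N'" "y' \<in> N'" using y y' unfolding T_def by auto
  hence yc: "y \<in> carrier M" "y' \<in> carrier M" using N'_car by auto
  have "val s (y \<oplus>\<^bsub>M\<^esub> y') (c \<oplus> c')" using val_sum[OF v s yc] .
  thus "y \<oplus>\<^bsub>M\<^esub> y' \<in> T s" using smodD(3)[OF N'_smod yN] unfolding T_def by auto
next
  fix b y assume b: "b \<in> carrier R" and y: "y \<in> T s"
  obtain c where v: "val s y c" using y unfolding T_def by auto
  have yN: "y \<in> N'" using y unfolding T_def by auto
  hence yc: "y \<in> carrier M" using N'_car by auto
  have "val s (b \<odot>\<^bsub>M\<^esub> y) (b \<otimes> c)" using val_smult[OF v b s yc] .
  thus "b \<odot>\<^bsub>M\<^esub> y \<in> T s" using smodD(4)[OF N'_smod b yN] unfolding T_def by auto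
qed

lemma s0_ex: "\<exists>s. s \<in> carrier R - q \<and> (\<forall>t\<in>carrier R - q. T s \<subseteq> T t \<longrightarrow> T t = T s)"
proof -
  define F where "F = T ` (carrier R - q)"
  have "\<one> \<notin> q" using q_prime primeideal.I_notcarr ideal.one_imp_carrier q_ideal by blast
  hence "F \<noteq> {}" unfolding F_def by auto
  moreover have "\<And>U. U \<in> F \<Longrightarrow> smod R M U" unfolding F_def using T_smod by auto
  ultimately obtain U where U: "U \<in> F" "\<forall>U'\<in>F. U \<subseteq> U' \<longrightarrow> U' = U"
    using max_smod by blast
  then obtain s where s: "s \<in> carrier R - q" "U = T s" unfolding F_def by auto
  show ?thesis
    by (rule exI[where x=s]) (use s U in \<open>auto simp: F_def\<close>)
qed

definition s0 where "s0 = (SOME s. s \<in> carrier R - q \<and> (\<forall>t\<in>carrier R - q. T s \<subseteq> T t \<longrightarrow> T t = T s))"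

lemma s0: "s0 \<in> carrier R" "s0 \<notin> q" "\<And>t. t \<in> carrier R - q \<Longrightarrow> T s0 \<subseteq> T t \<Longrightarrow> T t = T s0"
  using someI_ex[OF s0_ex] unfolding s0_def[symmetric] by blast+

definition S where "S = T s0"

lemma S_smod: "smod R M S" unfolding S_def using T_smod s0(1) .

lemma S_car: "S \<subseteq> carrier M" using smodD(1)[OF S_smod] .

lemma T_sub:
  assumes s: "s \<in> carrier R" "s \<notin> q"
  shows "T s \<subseteq> S"
proof -
  have ns: "s0 \<otimes> s \<notin> q" using primeideal.I_prime[OF q_prime s0(1) s(1)] s0(2) s(2) by auto
  have sub1: "T s \<subseteq> T (s0 \<otimes> s)"
    unfolding T_def using val_mult2[OF _ s(1) s0(1)] N'_car by blast
  have sub2: "T s0 \<subseteq> T (s0 \<otimes> s)"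
  proof
    fix y assume "y \<in> T s0"
    then obtain c where y: "y \<in> N'" "val s0 y c" unfolding T_def by auto
    have "val (s \<otimes> s0) y (s \<otimes> c)" using val_mult2[OF y(2) s0(1) s(1)] y(1) N'_car by auto
    thus "y \<in> T (s0 \<otimes> s)" using y(1) s(1) s0(1) unfolding T_def by (auto simp: m_comm)
  qed
  have "T (s0 \<otimes> s) = T s0" using s0(3)[OF _ sub2] ns s(1) s0(1) by auto
  thus ?thesis using sub1 unfolding S_def by auto
qed

lemma x0_N': "x0 \<in> N'" unfolding N'_def q_def annN_def using x0(1) by auto

lemma x0_S: "x0 \<in> S"
proof -
  have "s0 \<odot>\<^bsub>M\<^esub> x0 = \<zero>\<^bsub>M\<^esub> \<oplus>\<^bsub>M\<^esub> s0 \<odot>\<^bsub>M\<^esub> x0" using s0(1) x0(1) by simp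
  hence "val s0 x0 s0" unfolding val_def using s0(1) smodD(2)[OF N_smod] by auto
  thus ?thesis unfolding S_def T_def using x0_N' by auto
qed

lemma N_S: "N \<subseteq> S"
proof
  fix y assume y: "y \<in> N"
  have "y \<in> N'" unfolding N'_def using y N_car q_car smodD(4)[OF N_smod] by auto
  thus "y \<in> S" unfolding S_def T_def using val_N[OF y s0(1)] by auto
qed

lemma N_psub_S: "N \<subset> S" using N_S x0_S x0(2) by auto

lemma S_N': "S \<subseteq> N'" unfolding S_def T_def by auto

definition cof where "cof y = (SOME c. val s0 y c)"

lemma cof: "y \<in> S \<Longrightarrow> val s0 y (cof y)"
  unfolding cof_def S_def T_def by (auto intro: someI_ex)

lemma cof_car: "y \<in> S \<Longrightarrow> cof y \<in> carrier R"
  using cof unfolding val_def by auto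

lemma cof_coset:
  assumes y': "y' \<in> S" and y: "y \<in> carrier M" and d: "y \<ominus>\<^bsub>M\<^esub> y' \<in> N"
  shows "y \<in> S" "q +> cof y = q +> cof y'"
proof -
  have y'c: "y' \<in> carrier M" using y' S_car by auto
  have eq: "y = y' \<oplus>\<^bsub>M\<^esub> (y \<ominus>\<^bsub>M\<^esub> y')" using add_minus_cancel[OF y y'c] by simp
  have "y' \<oplus>\<^bsub>M\<^esub> (y \<ominus>\<^bsub>M\<^esub> y') \<in> S" using smodD(3)[OF S_smod y'] N_S d by auto
  thus yS: "y \<in> S" using eq by simp
  have "val s0 (y' \<oplus>\<^bsub>M\<^esub> (y \<ominus>\<^bsub>M\<^esub> y')) (cof y' \<oplus> \<zero>)"
    by (rule val_sum[OF cof[OF y'] val_N[OF d s0(1)] s0(1) y'c]) (use d N_car in auto)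
  hence v: "val s0 y (cof y')" using eq cof_car[OF y'] by simp
  have "cof y \<ominus> cof y' \<in> q" using val_unique[OF cof[OF yS] v] .
  thus "q +> cof y = q +> cof y'"
    using quotient_eq_iff_same_a_r_cos[OF q_ideal cof_car[OF yS] cof_car[OF y']] by simp
qed

lemma cof_nz:
  assumes y: "y \<in> S" "y \<notin> N"
  shows "cof y \<notin> q"
proof
  assume cq: "cof y \<in> q"
  obtain n where n: "n \<in> N" "s0 \<odot>\<^bsub>M\<^esub> y = n \<oplus>\<^bsub>M\<^esub> cof y \<odot>\<^bsub>M\<^esub> x0"
    using cof[OF y(1)] unfolding val_def by auto
  have "cof y \<odot>\<^bsub>M\<^esub> x0 \<in> N" using cq unfolding q_def annN_def by auto
  hence "s0 \<odot>\<^bsub>M\<^esub> y \<in> N" using n smodD(3)[OF N_smod] by auto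
  hence "s0 \<in> annN R M N y" unfolding annN_def using s0(1) by auto
  moreover have "annN R M N y = q" using N'_ann y S_N' by auto
  ultimately show False using s0(2) by auto
qed

lemma cof_lincomb:
  assumes "finite J" "\<forall>j\<in>J. y j \<in> S" "\<forall>j\<in>J. a j \<in> carrier R"
  shows "val s0 (finsum M (\<lambda>j. a j \<odot>\<^bsub>M\<^esub> y j) J) (finsum R (\<lambda>j. a j \<otimes> cof (y j)) J)"
  using assms
proof (induction J rule: finite_induct)
  case empty
  show ?case using val_N[OF smodD(2)[OF N_smod] s0(1)] by simp
next
  case (insert j J)
  have yc: "y j \<in> carrier M" "\<forall>i\<in>J. y i \<in> carrier M" using insert.prems S_car by auto
  have "val s0 (a j \<odot>\<^bsub>M\<^esub> y j \<oplus>\<^bsub>M\<^esub> finsum M (\<lambda>j. a j \<odot>\<^bsub>M\<^esub> y j) J) (a j \<otimes> cof (y j) \<oplus> finsum R (\<lambda>j. a j \<otimes> cof (y j)) J)"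
  proof (rule val_sum)
    show "val s0 (a j \<odot>\<^bsub>M\<^esub> y j) (a j \<otimes> cof (y j))"
      by (rule val_smult[OF cof]) (use insert.prems yc s0(1) in auto)
    show "val s0 (finsum M (\<lambda>j. a j \<odot>\<^bsub>M\<^esub> y j) J) (finsum R (\<lambda>j. a j \<otimes> cof (y j)) J)"
      using insert by auto
  qed (use insert.prems yc s0(1) in \<open>auto intro!: finsum_closed\<close>)
  moreover have "finsum M (\<lambda>j. a j \<odot>\<^bsub>M\<^esub> y j) (insert j J) = a j \<odot>\<^bsub>M\<^esub> y j \<oplus>\<^bsub>M\<^esub> finsum M (\<lambda>j. a j \<odot>\<^bsub>M\<^esub> y j) J"
    using insert.hyps insert.prems yc by (subst finsum_insert) (auto simp: Pi_def)
  moreover have "finsum R (\<lambda>j. a j \<otimes> cof (y j)) (insert j J) = a j \<otimes> cof (y j) \<oplus> finsum R (\<lambda>j. a j \<otimes> cof (y j)) J"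
    using insert.hyps insert.prems cof_car by (subst R.finsum_insert) (auto simp: Pi_def)
  ultimately show ?case by simp
qed

end



context stepctx
begin

lemma S_inv: "inv_ok R M S"
  unfolding inv_ok_def
proof (intro ballI impI)
  fix z assume z: "z \<in> carrier M - S" and qp: "primeideal (annN R M S z) R"
  define q' where "q' = annN R M S z"
  have zc: "z \<in> carrier M" and zS: "z \<notin> S" using z by auto
  have q'c: "q' \<subseteq> carrier R" unfolding q'_def annN_def by auto
  have q'p: "primeideal q' R" using qp unfolding q'_def .
  have one_q': "\<one> \<notin> q'"
  proof
    assume "\<one> \<in> q'"
    hence "q' = carrier R" using ideal.one_imp_carrier q'p primeideal.axioms(1) by blast
    thus False using primeideal.I_notcarr[OF q'p] by simp
  qed
  show "associated_prime R M (annN R M S z)"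
    unfolding q'_def[symmetric]
  proof (cases "q \<subseteq> q'")
    case False
    then obtain b where b: "b \<in> q" "b \<notin> q'" by auto
    have bc: "b \<in> carrier R" using b q_car by auto
    define w where "w = b \<odot>\<^bsub>M\<^esub> z"
    have wc: "w \<in> carrier M" unfolding w_def using bc zc by auto
    have eq: "annN R M N w = q'"
    proof
      show "annN R M N w \<subseteq> q'"
      proof
        fix r assume r: "r \<in> annN R M N w"
        hence rc: "r \<in> carrier R" and "r \<odot>\<^bsub>M\<^esub> w \<in> N" unfolding annN_def by auto
        hence "(r \<otimes> b) \<odot>\<^bsub>M\<^esub> z \<in> S" using N_S unfolding w_def using bc zc by (auto simp: smult_assoc1)
        hence "r \<otimes> b \<in> q'" unfolding q'_def annN_def using rc bc by auto
        thus "r \<in> q'" using primeideal.I_prime[OF q'p rc bc] b(2) by auto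
      qed
      show "q' \<subseteq> annN R M N w"
      proof
        fix r assume r: "r \<in> q'"
        hence rc: "r \<in> carrier R" and "r \<odot>\<^bsub>M\<^esub> z \<in> S" unfolding q'_def annN_def by auto
        hence "r \<odot>\<^bsub>M\<^esub> z \<in> N'" using S_N' by auto
        hence "b \<odot>\<^bsub>M\<^esub> (r \<odot>\<^bsub>M\<^esub> z) \<in> N" using b(1) unfolding N'_def by auto
        moreover have "b \<odot>\<^bsub>M\<^esub> (r \<odot>\<^bsub>M\<^esub> z) = r \<odot>\<^bsub>M\<^esub> w"
          unfolding w_def using rc bc zc by (simp add: smult_assoc1[symmetric] m_comm)
        ultimately show "r \<in> annN R M N w" unfolding annN_def using rc by auto
      qed
    qed
    have wN: "w \<notin> N"
    proof
      assume "w \<in> N"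
      hence "\<one> \<in> annN R M N w" unfolding annN_def using wc by auto
      thus False using eq one_q' by simp
    qed
    have "associated_prime R M (annN R M N w)"
      using N_inv wc wN q'p eq unfolding inv_ok_def by auto
    thus "associated_prime R M q'" using eq by simp
  next
    case True
    have "q' \<subseteq> q"
    proof (cases "z \<in> N'")
      case True
      show ?thesis
      proof
        fix t assume t: "t \<in> q'"
        hence tc: "t \<in> carrier R" and "t \<odot>\<^bsub>M\<^esub> z \<in> S" unfolding q'_def annN_def by auto
        then obtain c where "val s0 (t \<odot>\<^bsub>M\<^esub> z) c" unfolding S_def T_def by auto
        hence v: "val (s0 \<otimes> t) z c" using val_mult s0(1) tc zc by auto
        show "t \<in> q"
        proof (rule ccontr)
          assume "t \<notin> q"
          hence ns: "s0 \<otimes> t \<notin> q" using primeideal.I_prime[OF q_prime s0(1) tc] s0(2) by auto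
          have "z \<in> T (s0 \<otimes> t)" unfolding T_def using True v by auto
          hence "z \<in> S" using T_sub[OF _ ns] s0(1) tc by auto
          thus False using zS by simp
        qed
      qed
    next
      case False
      then obtain b where b: "b \<in> q" "b \<odot>\<^bsub>M\<^esub> z \<notin> N" using zc unfolding N'_def by auto
      have bc: "b \<in> carrier R" using b q_car by auto
      define w where "w = b \<odot>\<^bsub>M\<^esub> z"
      have "b \<in> q'" using b(1) \<open>q \<subseteq> q'\<close> by auto
      hence "w \<in> S" unfolding w_def q'_def annN_def by auto
      hence "w \<in> N'" using S_N' by auto
      hence eqw: "annN R M N w = q" using N'_ann b(2) unfolding w_def by auto
      show ?thesis
      proof
        fix r assume r: "r \<in> q'"
        hence rc: "r \<in> carrier R" and "r \<odot>\<^bsub>M\<^esub> z \<in> S" unfolding q'_def annN_def by auto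
        hence "r \<odot>\<^bsub>M\<^esub> z \<in> N'" using S_N' by auto
        hence "b \<odot>\<^bsub>M\<^esub> (r \<odot>\<^bsub>M\<^esub> z) \<in> N" using b(1) unfolding N'_def by auto
        moreover have "b \<odot>\<^bsub>M\<^esub> (r \<odot>\<^bsub>M\<^esub> z) = r \<odot>\<^bsub>M\<^esub> w"
          unfolding w_def using rc bc zc by (simp add: smult_assoc1[symmetric] m_comm)
        ultimately have "r \<in> annN R M N w" unfolding annN_def using rc by auto
        thus "r \<in> q" using eqw by simp
      qed
    qed
    hence "q' = q" using True by auto
    thus "associated_prime R M q'" using q_assoc by simp
  qed
qed

end



context stepctx
begin

lemma minus_swap:
  assumes "x \<in> carrier M" "y \<in> carrier M"
  shows "y \<ominus>\<^bsub>M\<^esub> x = \<ominus>\<^bsub>M\<^esub> (x \<ominus>\<^bsub>M\<^esub> y)"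
  using assms by (simp add: M.minus_eq M.minus_add M.a_comm)

lemma S_relPR:
  assumes Am: "matrix_over R A k l"
    and relN: "\<forall>r\<ge>1. relPR M A k l N r"
    and noPR: "\<not> partition_regular (quot_module R q) A k l"
  shows "\<forall>r\<ge>1. relPR M A k l S r"
proof (rule ccontr)
  assume "\<not> (\<forall>r\<ge>1. relPR M A k l S r)"
  then obtain r2 where r2: "r2 \<ge> 1" "\<not> relPR M A k l S r2" by auto
  then obtain \<chi>2 :: "'b \<Rightarrow> nat" where \<chi>2r: "\<chi>2 ` carrier M \<subseteq> {1..r2}"
    and \<chi>2c: "\<forall>x\<in>carrier M. \<forall>y\<in>carrier M. x \<ominus>\<^bsub>M\<^esub> y \<in> S \<longrightarrow> \<chi>2 x = \<chi>2 y"
    and \<chi>2n: "\<not> (\<exists>m. (\<forall>j<l. m j \<in> carrier M) \<and> (\<forall>i<k. mat_apply M A l m i \<in> S) \<and>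
                 (\<exists>j<l. m j \<notin> S) \<and> (\<exists>c. \<forall>j<l. \<chi>2 (m j) = c))"
    unfolding relPR_def by blast
  obtain r1 where r1: "r1 \<ge> 1" "\<not> partition_regular_for (quot_module R q) A k l r1"
    using noPR unfolding partition_regular_def by auto
  then obtain \<chi>1 :: "'a set \<Rightarrow> nat" where \<chi>1r: "\<chi>1 ` carrier (quot_module R q) \<subseteq> {1..r1}"
    and \<chi>1n: "\<not> (\<exists>m. (\<forall>j<l. m j \<in> carrier (quot_module R q))
           \<and> (\<forall>i<k. mat_apply (quot_module R q) A l m i = \<zero>\<^bsub>quot_module R q\<^esub>)
           \<and> (\<exists>j<l. m j \<noteq> \<zero>\<^bsub>quot_module R q\<^esub>)
           \<and> (\<exists>c. \<forall>j<l. \<chi>1 (m j) = c))"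
    unfolding partition_regular_for_def by blast
  define psi where "psi y = q +> cof y" for y
  have psi_car: "psi y \<in> carrier (quot_module R q)" if "y \<in> S" for y
    unfolding psi_def quot_carrier by (rule FactRing_carrier_coset[OF cof_car[OF that]])
  define snd' where "snd' x = (if x \<in> S then \<chi>1 (psi x) else 0)" for x
  define \<chi> where "\<chi> x = \<chi>2 x + r2 * snd' x" for x
  define r where "r = r2 + r2 * r1"
  have "relPR M A k l N r" using relN r2 unfolding r_def by auto
  note ex = this[unfolded relPR_def, rule_format, of \<chi>]
  have \<chi>r: "\<chi> ` carrier M \<subseteq> {1..r}"
  proof
    fix v assume "v \<in> \<chi> ` carrier M"
    then obtain x where x: "x \<in> carrier M" "v = \<chi> x" by auto
    have a: "\<chi>2 x \<in> {1..r2}" using \<chi>2r x by auto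
    have "snd' x \<le> r1" unfolding snd'_def using \<chi>1r psi_car by force
    hence m2: "r2 * snd' x \<le> r2 * r1" by (rule mult_le_mono2)
    have "\<chi>2 x \<le> r2" using a by auto
    hence "\<chi>2 x + r2 * snd' x \<le> r2 + r2 * r1" using m2 by (rule add_le_mono)
    thus "v \<in> {1..r}" using a x unfolding \<chi>_def r_def by auto
  qed
  have \<chi>c: "\<forall>x\<in>carrier M. \<forall>y\<in>carrier M. x \<ominus>\<^bsub>M\<^esub> y \<in> N \<longrightarrow> \<chi> x = \<chi> y"
  proof (intro ballI impI)
    fix x y assume x: "x \<in> carrier M" and y: "y \<in> carrier M" and d: "x \<ominus>\<^bsub>M\<^esub> y \<in> N"
    have d': "y \<ominus>\<^bsub>M\<^esub> x \<in> N" using smod_neg[OF N_smod d] minus_swap[OF x y] by simp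
    have "\<chi>2 x = \<chi>2 y" using \<chi>2c x y d N_S by auto
    moreover have "snd' x = snd' y"
    proof (cases "y \<in> S")
      case True
      then show ?thesis using cof_coset[OF True x d] unfolding snd'_def psi_def by auto
    next
      case False
      have "x \<notin> S" using cof_coset(1)[OF _ y d'] False by auto
      then show ?thesis using False unfolding snd'_def by auto
    qed
    ultimately show "\<chi> x = \<chi> y" unfolding \<chi>_def by simp
  qed
  obtain m where mc: "\<forall>j<l. m j \<in> carrier M" and m0: "\<forall>i<k. mat_apply M A l m i \<in> N"
    and mnz: "\<exists>j<l. m j \<notin> N" and mcol: "\<exists>c. \<forall>j<l. \<chi> (m j) = c"
    using ex[OF \<chi>r] \<chi>c by auto
  obtain j0 where j0: "j0 < l" "m j0 \<notin> N" using mnz by auto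
  have dec: "\<chi>2 (m j) = \<chi>2 (m j0) \<and> snd' (m j) = snd' (m j0)" if j: "j < l" for j
  proof -
    have "\<chi> (m j) = \<chi> (m j0)" using mcol j j0 by auto
    moreover have "m j \<in> carrier M" "m j0 \<in> carrier M" using mc j j0 by auto
    hence "\<chi>2 (m j) \<in> {1..r2}" "\<chi>2 (m j0) \<in> {1..r2}" using \<chi>2r by (auto simp del: atLeastAtMost_iff)
    ultimately show ?thesis using decode_pair unfolding \<chi>_def by blast
  qed
  have mS: "\<forall>j<l. m j \<in> S"
  proof (rule ccontr)
    assume "\<not> (\<forall>j<l. m j \<in> S)"
    hence "\<exists>j<l. m j \<notin> S" by auto
    moreover have "\<forall>i<k. mat_apply M A l m i \<in> S" using m0 N_S by auto
    moreover have "\<exists>c. \<forall>j<l. \<chi>2 (m j) = c" using dec by auto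
    ultimately show False using \<chi>2n mc by blast
  qed
  define m' where "m' j = psi (m j)" for j
  have m'c: "\<forall>j<l. m' j \<in> carrier (quot_module R q)" using mS psi_car unfolding m'_def by auto
  have m'0: "\<forall>i<k. mat_apply (quot_module R q) A l m' i = \<zero>\<^bsub>quot_module R q\<^esub>"
  proof (intro allI impI)
    fix i assume i: "i < k"
    have Ai: "\<forall>j<l. A i j \<in> carrier R" using Am i unfolding matrix_over_def by auto
    have cc: "\<forall>j<l. cof (m j) \<in> carrier R" using mS cof_car by auto
    have v1: "val s0 (mat_apply M A l m i) (\<Oplus>j\<in>{..<l}. A i j \<otimes> cof (m j))"
      unfolding mat_apply_def by (rule cof_lincomb) (use mS Ai in auto)
    have v2: "val s0 (mat_apply M A l m i) \<zero>" using val_N[OF _ s0(1)] m0 i by auto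
    have sc: "(\<Oplus>j\<in>{..<l}. A i j \<otimes> cof (m j)) \<in> carrier R" using Ai cc by (auto intro!: finsum_closed)
    have "(\<Oplus>j\<in>{..<l}. A i j \<otimes> cof (m j)) \<ominus> \<zero> \<in> q" using val_unique[OF v1 v2] .
    hence inq: "(\<Oplus>j\<in>{..<l}. A i j \<otimes> cof (m j)) \<in> q" using sc by (simp add: R.minus_eq)
    have "mat_apply (quot_module R q) A l m' i = q +> (\<Oplus>j\<in>{..<l}. A i j \<otimes> cof (m j))"
      by (rule quot_mat_apply[where P=q and l=l and A=A and i=i and c="\<lambda>j. cof (m j)" and m=m',
            OF q_ideal Ai cc]) (simp add: m'_def psi_def)
    also have "\<dots> = q" using coset_eq_zero_iff[OF q_ideal sc] inq by simp
    finally show "mat_apply (quot_module R q) A l m' i = \<zero>\<^bsub>quot_module R q\<^esub>" by (simp add: quot_zero)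
  qed
  have m'nz: "\<exists>j<l. m' j \<noteq> \<zero>\<^bsub>quot_module R q\<^esub>"
  proof -
    have "cof (m j0) \<notin> q" using cof_nz mS j0 by auto
    hence "m' j0 \<noteq> q" unfolding m'_def psi_def using coset_eq_zero_iff[OF q_ideal cof_car] mS j0 by auto
    thus ?thesis using j0 by (auto simp: quot_zero)
  qed
  have m'col: "\<exists>c. \<forall>j<l. \<chi>1 (m' j) = c"
  proof (rule exI[where x="\<chi>1 (m' j0)"], intro allI impI)
    fix j assume j: "j < l"
    have "snd' (m j) = snd' (m j0)" using dec j by auto
    thus "\<chi>1 (m' j) = \<chi>1 (m' j0)" using mS j j0 unfolding snd'_def m'_def by auto
  qed
  show False using \<chi>1n m'c m'0 m'nz m'col by blast
qed

lemma step:
  assumes Am: "matrix_over R A k l"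
    and relN: "\<forall>r\<ge>1. relPR M A k l N r"
    and noPR: "\<forall>P. associated_prime R M P \<longrightarrow> \<not> partition_regular (quot_module R P) A k l"
  shows "\<exists>S'. smod R M S' \<and> N \<subset> S' \<and> inv_ok R M S' \<and> (\<forall>r\<ge>1. relPR M A k l S' r)"
  using S_smod N_psub_S S_inv S_relPR[OF Am relN] noPR q_assoc by blast

end



theorem theorem2p1:
  fixes R :: "'a ring" and M :: "('a, 'b) module"
    and A :: "nat \<Rightarrow> nat \<Rightarrow> 'a" and k l :: nat
  assumes "cring R" and "noetherian_ring R"
    and "module R M" and "finitely_generated_module R M"
    and "matrix_over R A k l"
  shows "partition_regular M A k l \<longleftrightarrow>
         (\<exists>P. associated_prime R M P \<and> partition_regular (quot_module R P) A k l)"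
proof -
  interpret module R M by fact
  interpret noetherian_ring R by fact
  obtain xs where xs: "set xs \<subseteq> carrier M"
    "\<forall>x\<in>carrier M. \<exists>c. (\<forall>i<length xs. c i \<in> carrier R) \<and>
            x = finsum M (\<lambda>i. c i \<odot>\<^bsub>M\<^esub> xs ! i) {..<length xs}"
    using assms(4) unfolding finitely_generated_module_def by blast
  interpret mctx R M xs
    by (rule mctx.intro, rule fgmod.intro) (use assms xs in \<open>auto simp: fgmod_axioms_def\<close>)
  show ?thesis
  proof
    assume PR: "partition_regular M A k l"
    show "\<exists>P. associated_prime R M P \<and> partition_regular (quot_module R P) A k l"
    proof (rule ccontr)
      assume no: "\<not> (\<exists>P. associated_prime R M P \<and> partition_regular (quot_module R P) A k l)"
      have noPR: "\<forall>P. associated_prime R M P \<longrightarrow> \<not> partition_regular (quot_module R P) A k l"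
        using no by auto
      define F where "F = {N. smod R M N \<and> inv_ok R M N \<and> (\<forall>r\<ge>1. relPR M A k l N r)}"
      have "\<forall>r\<ge>1. relPR M A k l {\<zero>\<^bsub>M\<^esub>} r" using relPR_zero[OF PR] by auto
      hence "{\<zero>\<^bsub>M\<^esub>} \<in> F" unfolding F_def using smod_zero inv_ok_zero by auto
      hence "F \<noteq> {}" by auto
      moreover have "\<And>T. T \<in> F \<Longrightarrow> smod R M T" unfolding F_def by auto
      ultimately have "\<exists>T\<in>F. \<forall>T'\<in>F. T \<subseteq> T' \<longrightarrow> T' = T" by (rule max_smod)
      then obtain N where N: "N \<in> F" and Nmax: "\<forall>T'\<in>F. N \<subseteq> T' \<longrightarrow> T' = N"
        by (elim bexE)
      have Ns: "smod R M N" "inv_ok R M N" "\<forall>r\<ge>1. relPR M A k l N r" using N unfolding F_def by auto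
      have "N \<noteq> carrier M" using relPR_full[of 1 A k l] Ns(3) by auto
      then interpret stepctx R M xs N
        by unfold_locales (use Ns in auto)
      obtain S' where S': "smod R M S'" "N \<subset> S'" "inv_ok R M S'" "\<forall>r\<ge>1. relPR M A k l S' r"
        using step[OF assms(5) Ns(3) noPR] by blast
      have "S' \<in> F" unfolding F_def using S' by auto
      hence "S' = N" using Nmax S'(2) by auto
      thus False using S'(2) by auto
    qed
  next
    assume "\<exists>P. associated_prime R M P \<and> partition_regular (quot_module R P) A k l"
    then obtain P x where P: "primeideal P R" "x \<in> carrier M" "P = annihilator R M x"
      "partition_regular (quot_module R P) A k l"
      unfolding associated_prime_def by blast
    show "partition_regular M A k l"
      by (rule PR_from_assoc[OF assms(5) P])
  qed
qed


end
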